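(* Let $f:(\mathbb{R}^d)^n\to\mathbb{R}$ be a random layered network of the form $f=g\circ F_W$, where $F_W$ is a regular random convolutional layer with $d$ input channels and $g$ is a random layered network independent of $W$. Then $f$ is $\mathbb{SO}(d)$-invariant: for every $U\in\mathbb{SO}(d)$, the random function $Uf$ defined by $(Uf)(\vec{\mathbf{x}})=f(U^{-1}\vec{\mathbf{x}})$ has the same distribution as $f$.
   Context: $\mathbb{SO}(d)$ acts on $(\mathbb{R}^d)^n$ by $U\cdot(\mathbf{x}_1,\ldots,\mathbf{x}_n)=(U\mathbf{x}_1,\ldots,U\mathbf{x}_n)$. A layer is a map $\mathbf{x}\mapsto\sigma(W\mathbf{x})$ ($\sigma:\mathbb{R}\to\mathbb{R}$ applied coordinatewise); a layered network is a composition of layers. A convolutional layer of width $w$, stride $s$ (with $s\mid n-w$), $d_1$ input channels and $d_2\times(d_1w)$ weight matrix $W$ is $F_W(\vec{\mathbf{x}})=\left(\sigma(WT_{0}(\vec{\mathbf{x}})),\ldots,\sigma(WT_{\frac{n-w}{s}}(\vec{\mathbf{x}}))\right)$, where $T_i(\vec{\mathbf{x}})=(\mathbf{x}_{is+1},\ldots,\mathbf{x}_{is+w})\in\mathbb{R}^{d_1w}$. It is a regular random convolutional layer if $W$ is random and for every orthogonal $(d_1w)\times(d_1w)$ matrix $U$, $W$ and $WU$ have the same distribution. *)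

theory Defs
  imports "HOL-Probability.Probability"
begin

text \<open>Vectors and matrices are represented as nat-indexed functions, with explicit dimensions;
entries outside the relevant index range are irrelevant (or zero).\<close>

type_synonym vec = "nat \<Rightarrow> real"
type_synonym mat = "nat \<Rightarrow> nat \<Rightarrow> real"

definition matS :: "mat measure" where
  "matS = PiM UNIV (\<lambda>_. PiM UNIV (\<lambda>_. borel))"

definition mat_mul :: "nat \<Rightarrow> nat \<Rightarrow> nat \<Rightarrow> mat \<Rightarrow> mat \<Rightarrow> mat" where
  "mat_mul m k l A B = (\<lambda>i j. if i < m \<and> j < l then (\<Sum>p<k. A i p * B p j) else 0)"

definition orthogonal_mat :: "nat \<Rightarrow> mat \<Rightarrow> bool" where
  "orthogonal_mat k U \<longleftrightarrow>
     (\<forall>i<k. \<forall>j<k. (\<Sum>p<k. U p i * U p j) = (if i = j then 1 else 0))"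

definition mat_det :: "nat \<Rightarrow> mat \<Rightarrow> real" where
  "mat_det k U = (\<Sum>p\<in>{p. p permutes {..<k}}. of_int (sign p) * (\<Prod>i<k. U i (p i)))"

definition SO :: "nat \<Rightarrow> mat set" where
  "SO d = {U. orthogonal_mat d U \<and> mat_det d U = 1}"

definition mat_transpose :: "mat \<Rightarrow> mat" where
  "mat_transpose U = (\<lambda>i j. U j i)"

text \<open>Action of a d x d matrix V on (R^d)^n: (x_1,...,x_n) \<mapsto> (V x_1, ..., V x_n).
  An input is X :: nat \<Rightarrow> vec, X j being the (j+1)-th point (j < n).\<close>
definition act :: "nat \<Rightarrow> mat \<Rightarrow> (nat \<Rightarrow> vec) \<Rightarrow> (nat \<Rightarrow> vec)" where
  "act d V X = (\<lambda>j c. if c < d then (\<Sum>e<d. V c e * X j e) else 0)"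

definition layer :: "nat \<Rightarrow> nat \<Rightarrow> (real \<Rightarrow> real) \<Rightarrow> mat \<Rightarrow> vec \<Rightarrow> vec" where
  "layer m k \<sigma> A x = (\<lambda>i. if i < m then \<sigma> (\<Sum>j<k. A i j * x j) else 0)"

text \<open>Layered network with widths ks = [k_0,...,k_L], activations \<sigma>s (length L) and weights Ws l
  (a k_(l+1) x k_l matrix): composition of the first l layers.\<close>
primrec net :: "nat list \<Rightarrow> (real \<Rightarrow> real) list \<Rightarrow> (nat \<Rightarrow> mat) \<Rightarrow> nat \<Rightarrow> vec \<Rightarrow> vec" where
  "net ks \<sigma>s Ws 0 x = x"
| "net ks \<sigma>s Ws (Suc l) x = layer (ks ! Suc l) (ks ! l) (\<sigma>s ! l) (Ws l) (net ks \<sigma>s Ws l x)"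

text \<open>T_i(x) = (x_{is+1},...,x_{is+w}) in R^{d w} (0-based indices here).\<close>
definition conv_T :: "nat \<Rightarrow> nat \<Rightarrow> nat \<Rightarrow> nat \<Rightarrow> (nat \<Rightarrow> vec) \<Rightarrow> vec" where
  "conv_T d w s i X = (\<lambda>p. if p < d * w then X (i * s + p div d) (p mod d) else 0)"

text \<open>Convolutional layer F_W with width w, stride s, d input channels, d2 output channels;
  W is a d2 x (d w) matrix. Output: ((n-w)/s + 1) points of R^{d2}.\<close>
definition conv_layer :: "nat \<Rightarrow> nat \<Rightarrow> nat \<Rightarrow> nat \<Rightarrow> nat \<Rightarrow> (real \<Rightarrow> real) \<Rightarrow> mat
    \<Rightarrow> (nat \<Rightarrow> vec) \<Rightarrow> (nat \<Rightarrow> vec)" where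
  "conv_layer d w s n d2 \<sigma> W X =
     (\<lambda>i. if i \<le> (n - w) div s then layer d2 (d * w) \<sigma> W (conv_T d w s i X) else (\<lambda>_. 0))"

definition flatten :: "nat \<Rightarrow> nat \<Rightarrow> (nat \<Rightarrow> vec) \<Rightarrow> vec" where
  "flatten d2 m Y = (\<lambda>q. if q < m * d2 then Y (q div d2) (q mod d2) else 0)"

definition conv_net :: "nat \<Rightarrow> nat \<Rightarrow> nat \<Rightarrow> nat \<Rightarrow> nat \<Rightarrow> (real \<Rightarrow> real) \<Rightarrow> mat
    \<Rightarrow> nat list \<Rightarrow> (real \<Rightarrow> real) list \<Rightarrow> (nat \<Rightarrow> mat) \<Rightarrow> (nat \<Rightarrow> vec) \<Rightarrow> real" where
  "conv_net d w s n d2 \<sigma> W ks \<sigma>s Ws X =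
     net ks \<sigma>s Ws (length \<sigma>s) (flatten d2 ((n - w) div s + 1) (conv_layer d w s n d2 \<sigma> W X)) 0"

definition regular_random_matrix :: "'a measure \<Rightarrow> nat \<Rightarrow> nat \<Rightarrow> ('a \<Rightarrow> mat) \<Rightarrow> bool" where
  "regular_random_matrix M m k W \<longleftrightarrow> W \<in> measurable M matS \<and>
     (\<forall>U. orthogonal_mat k U \<longrightarrow> distr M matS W = distr M matS (\<lambda>\<omega>. mat_mul m k k (W \<omega>) U))"

definition indep_rv :: "'a measure \<Rightarrow> 'b measure \<Rightarrow> ('a \<Rightarrow> 'b) \<Rightarrow> 'c measure \<Rightarrow> ('a \<Rightarrow> 'c) \<Rightarrow> bool" where
  "indep_rv M S X T Y \<longleftrightarrow> X \<in> measurable M S \<and> Y \<in> measurable M T \<and>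
     prob_space.indep_set M
       (sigma_sets (space M) {X -` A \<inter> space M | A. A \<in> sets S})
       (sigma_sets (space M) {Y -` A \<inter> space M | A. A \<in> sets T})"

end

theory Submission
  imports "Jordan_Normal_Form.Determinant" Defs
begin


lemma sum_blocks: "(\<Sum>p<d*w. f p) = (\<Sum>q<w. \<Sum>e<d. f (q*d+e :: nat)) " for f :: "nat \<Rightarrow> real"
proof (induction w)
  case 0 then show ?case by simp
next
  case (Suc w)
  have "{..<d * Suc w} = {..<d*w} \<union> {d*w..<d*w+d}" by auto
  moreover have "(\<Sum>p\<in>{d*w..<d*w+d}. f p) = (\<Sum>e<d. f (w*d+e))"
    by (rule sum.reindex_bij_witness[of _ "\<lambda>e. w*d+e" "\<lambda>p. p - d*w"]) (auto simp: mult.commute)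
  ultimately show ?case using Suc by (simp add: sum.union_disjoint ivl_disj_int)
qed

lemma orth_right:
  assumes "orthogonal_mat d U" "i < d" "j < d"
  shows "(\<Sum>p<d. U i p * U j p) = (if i = j then 1 else 0)"
proof -
  define A :: "real Matrix.mat" where "A = Matrix.mat d d (\<lambda>(i,j). U j i)"
  define B :: "real Matrix.mat" where "B = Matrix.mat d d (\<lambda>(i,j). U i j)"
  have A: "A \<in> carrier_mat d d" and B: "B \<in> carrier_mat d d" by (auto simp: A_def B_def)
  have "A * B = 1\<^sub>m d"
  proof (rule eq_matI)
    fix a b assume "a < dim_row (1\<^sub>m d)" "b < dim_col (1\<^sub>m d)"
    then show "(A * B) $$ (a, b) = 1\<^sub>m d $$ (a, b)"
      using assms(1) unfolding orthogonal_mat_def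
      by (simp add: A_def B_def scalar_prod_def atLeast0LessThan)
  qed (auto simp: A_def B_def)
  then have "B * A = 1\<^sub>m d" by (rule mat_mult_left_right_inverse[OF A B])
  then have "(B * A) $$ (i,j) = 1\<^sub>m d $$ (i,j)" by simp
  then show ?thesis using assms(2,3)
    by (simp add: A_def B_def scalar_prod_def atLeast0LessThan)
qed



definition blk :: "nat \<Rightarrow> mat \<Rightarrow> mat" where
  "blk d V = (\<lambda>p j. if p div d = j div d then V (p mod d) (j mod d) else 0)"

lemma orth_blk:
  assumes "orthogonal_mat d U"
  shows "orthogonal_mat (d*w) (blk d (mat_transpose U))"
  unfolding orthogonal_mat_def
proof (intro allI impI)
  fix i j assume i: "i < d*w" and j: "j < d*w"
  then have d: "0 < d" by (cases d) auto
  have iw: "i div d < w" using i by (metis less_mult_imp_div_less mult.commute)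
  let ?S = "(\<Sum>e<d. U (i mod d) e * U (j mod d) e)"
  have "(\<Sum>p<d*w. blk d (mat_transpose U) p i * blk d (mat_transpose U) p j)
      = (\<Sum>q<w. \<Sum>e<d. blk d (mat_transpose U) (q*d+e) i * blk d (mat_transpose U) (q*d+e) j)"
    by (rule sum_blocks)
  also have "\<dots> = (\<Sum>q<w. if q = i div d \<and> q = j div d then ?S else 0)"
  proof (intro sum.cong refl)
    fix q assume "q \<in> {..<w}"
    show "(\<Sum>e<d. blk d (mat_transpose U) (q*d+e) i * blk d (mat_transpose U) (q*d+e) j)
       = (if q = i div d \<and> q = j div d then ?S else 0)"
    proof (cases "q = i div d \<and> q = j div d")
      case True then show ?thesis by (auto simp: blk_def mat_transpose_def d intro!: sum.cong)
    next
      case False then show ?thesis by (auto simp: blk_def mat_transpose_def d intro!: sum.neutral)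
    qed
  qed
  also have "\<dots> = (if i div d = j div d then ?S else 0)"
  proof (cases "i div d = j div d")
    case True then show ?thesis using iw by (simp add: sum.delta')
  next
    case False then show ?thesis by (auto intro!: sum.neutral)
  qed
  also have "\<dots> = (if i = j then 1 else 0)"
  proof -
    have eq: "i = j \<longleftrightarrow> i div d = j div d \<and> i mod d = j mod d" by (metis div_mult_mod_eq)
    show ?thesis using orth_right[OF assms, of "i mod d" "j mod d"] d eq by auto
  qed
  finally show "(\<Sum>p<d*w. blk d (mat_transpose U) p i * blk d (mat_transpose U) p j) = (if i = j then 1 else 0)" .
qed

lemma conv_act:
  assumes "p < d*w"
  shows "conv_T d w s i (act d V X) p = (\<Sum>j<d*w. blk d V p j * conv_T d w s i X j)"
proof -
  from assms have d: "0 < d" by (cases d) auto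
  have pw: "p div d < w" using assms by (metis less_mult_imp_div_less mult.commute)
  have "(\<Sum>j<d*w. blk d V p j * conv_T d w s i X j)
      = (\<Sum>q<w. \<Sum>e<d. blk d V p (q*d+e) * conv_T d w s i X (q*d+e))"
    by (rule sum_blocks)
  also have "\<dots> = (\<Sum>q<w. if q = p div d then (\<Sum>e<d. V (p mod d) e * X (i * s + p div d) e) else 0)"
  proof (intro sum.cong refl)
    fix q assume q: "q \<in> {..<w}"
    have "q*d + e < d*w" if "e < d" for e
    proof -
      have "q*d + e < q*d + d" using that by simp
      also have "\<dots> = (q+1)*d" by simp
      also have "\<dots> \<le> w*d" using q by (intro mult_right_mono) auto
      finally show ?thesis by (simp add: mult.commute)
    qed
    then show "(\<Sum>e<d. blk d V p (q*d+e) * conv_T d w s i X (q*d+e))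
        = (if q = p div d then (\<Sum>e<d. V (p mod d) e * X (i * s + p div d) e) else 0)"
      by (auto simp: blk_def conv_T_def d intro!: sum.cong)
  qed
  also have "\<dots> = (\<Sum>e<d. V (p mod d) e * X (i * s + p div d) e)"
    using pw by (simp add: sum.delta')
  also have "\<dots> = conv_T d w s i (act d V X) p"
    using assms d by (simp add: conv_T_def act_def)
  finally show ?thesis by simp
qed

lemma layer_mul:
  assumes "\<And>p. p < k \<Longrightarrow> y p = (\<Sum>j<k. B p j * x j)"
  shows "layer m k \<tau> A y = layer m k \<tau> (mat_mul m k k A B) x"
proof -
  have "(\<Sum>j<k. A i j * y j) = (\<Sum>p<k. mat_mul m k k A B i p * x p)" if "i < m" for i
  proof -
    have "(\<Sum>j<k. A i j * y j) = (\<Sum>j<k. \<Sum>p<k. A i j * B j p * x p)"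
      using assms by (simp add: sum_distrib_left mult.assoc)
    also have "\<dots> = (\<Sum>p<k. \<Sum>j<k. A i j * B j p * x p)" by (rule sum.swap)
    also have "\<dots> = (\<Sum>p<k. mat_mul m k k A B i p * x p)"
      using that by (simp add: mat_mul_def sum_distrib_right)
    finally show ?thesis .
  qed
  then show ?thesis by (auto simp: layer_def)
qed

lemma conv_net_act:
  "conv_net d w s n d2 \<sigma> A ks \<sigma>s G (act d V X)
   = conv_net d w s n d2 \<sigma> (mat_mul d2 (d*w) (d*w) A (blk d V)) ks \<sigma>s G X"
proof -
  have "conv_layer d w s n d2 \<sigma> A (act d V X) = conv_layer d w s n d2 \<sigma> (mat_mul d2 (d*w) (d*w) A (blk d V)) X"
    unfolding conv_layer_def
    by (intro ext if_cong refl layer_mul conv_act)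
  then show ?thesis by (simp add: conv_net_def)
qed

lemma entry_meas: "(\<lambda>A. A i j) \<in> borel_measurable matS"
  unfolding matS_def
  by (rule measurable_compose[where f="\<lambda>A. A i"]) (rule measurable_component_singleton, simp)+

lemma meas_matS:
  assumes "\<And>i j. (\<lambda>x. f x i j) \<in> borel_measurable N"
  shows "f \<in> measurable N matS"
proof -
  have "(\<lambda>x i. (\<lambda>x. f x i) x) \<in> measurable N matS"
    unfolding matS_def
  proof (rule measurable_PiM_single')
    fix i :: nat
    show "(\<lambda>x. f x i) \<in> measurable N (PiM UNIV (\<lambda>_. borel))"
      using measurable_PiM_single'[of UNIV "\<lambda>j x. f x i j" N "\<lambda>_. borel"] assms
      by (simp add: space_PiM)
  qed (simp add: space_PiM)
  then show ?thesis by simp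
qed

lemma net_meas:
  assumes "\<forall>\<tau>\<in>set \<sigma>s. \<tau> \<in> borel_measurable borel"
    and "\<And>l i j. (\<lambda>p. G p l i j) \<in> borel_measurable N"
    and "\<And>i. (\<lambda>p. x p i) \<in> borel_measurable N"
    and "l \<le> length \<sigma>s"
  shows "(\<lambda>p. net ks \<sigma>s (G p) l (x p) i) \<in> borel_measurable N"
  using assms(4)
proof (induction l arbitrary: i)
  case 0 then show ?case using assms(3) by simp
next
  case (Suc l)
  have IH: "\<And>j. (\<lambda>p. net ks \<sigma>s (G p) l (x p) j) \<in> borel_measurable N" using Suc by simp
  have t: "(\<sigma>s ! l) \<in> borel_measurable borel" using Suc.prems assms(1) by simp
  show ?case
  proof (cases "i < ks ! Suc l")
    case True
    have "(\<lambda>p. (\<sigma>s ! l) (\<Sum>j<ks ! l. G p l i j * net ks \<sigma>s (G p) l (x p) j)) \<in> borel_measurable N"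
      by (rule measurable_compose[OF _ t]) (intro borel_measurable_sum borel_measurable_times assms(2) IH)
    then show ?thesis using True by (simp add: layer_def)
  next
    case False then show ?thesis by (simp add: layer_def)
  qed
qed

lemma joint_indep:
  assumes M: "prob_space M" and X: "X \<in> measurable M S" and Y: "Y \<in> measurable M T"
    and ind: "\<And>A B. A \<in> sets S \<Longrightarrow> B \<in> sets T \<Longrightarrow>
       measure M (X -` A \<inter> Y -` B \<inter> space M) = measure M (X -` A \<inter> space M) * measure M (Y -` B \<inter> space M)"
  shows "distr M (S \<Otimes>\<^sub>M T) (\<lambda>\<omega>. (X \<omega>, Y \<omega>)) = distr M S X \<Otimes>\<^sub>M distr M T Y"
proof -
  interpret prob_space M by (rule M)
  have XY: "(\<lambda>\<omega>. (X \<omega>, Y \<omega>)) \<in> measurable M (S \<Otimes>\<^sub>M T)" using X Y by (rule measurable_Pair)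
  interpret PX: prob_space "distr M S X" by (rule prob_space_distr[OF X])
  interpret PY: prob_space "distr M T Y" by (rule prob_space_distr[OF Y])
  show ?thesis
  proof (rule pair_measure_eqI[symmetric])
    show "sigma_finite_measure (distr M S X)" by unfold_locales
    show "sigma_finite_measure (distr M T Y)" by unfold_locales
    show "sets (distr M S X \<Otimes>\<^sub>M distr M T Y) = sets (distr M (S \<Otimes>\<^sub>M T) (\<lambda>\<omega>. (X \<omega>, Y \<omega>)))"
      by (simp only: sets_distr, rule sets_pair_measure_cong) (simp_all only: sets_distr)
  next
    fix A B assume A: "A \<in> sets (distr M S X)" and B: "B \<in> sets (distr M T Y)"
    then have A': "A \<in> sets S" and B': "B \<in> sets T" by auto
    have pre: "(\<lambda>\<omega>. (X \<omega>, Y \<omega>)) -` (A \<times> B) \<inter> space M = X -` A \<inter> Y -` B \<inter> space M" by auto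
    have "emeasure (distr M (S \<Otimes>\<^sub>M T) (\<lambda>\<omega>. (X \<omega>, Y \<omega>))) (A \<times> B)
        = emeasure M (X -` A \<inter> Y -` B \<inter> space M)"
      by (simp only: emeasure_distr[OF XY pair_measureI[OF A' B']] pre)
    also have "\<dots> = ennreal (measure M (X -` A \<inter> space M) * measure M (Y -` B \<inter> space M))"
      by (simp only: emeasure_eq_measure ind[OF A' B'])
    also have "\<dots> = emeasure (distr M S X) A * emeasure (distr M T Y) B"
      by (simp only: emeasure_distr[OF X A'] emeasure_distr[OF Y B'] emeasure_eq_measure ennreal_mult measure_nonneg)
    finally show "emeasure (distr M S X) A * emeasure (distr M T Y) B
       = emeasure (distr M (S \<Otimes>\<^sub>M T) (\<lambda>\<omega>. (X \<omega>, Y \<omega>))) (A \<times> B)" by simp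
  qed
qed

theorem lemma2:
  fixes M :: "'a measure" and d n w s d2 :: nat and \<sigma> :: "real \<Rightarrow> real" and W :: "'a \<Rightarrow> mat"
    and ks :: "nat list" and \<sigma>s :: "(real \<Rightarrow> real) list" and Ws :: "'a \<Rightarrow> nat \<Rightarrow> mat" and U :: mat
  assumes "prob_space M"
    and "0 < s" and "w \<le> n" and "s dvd (n - w)"
    and "regular_random_matrix M d2 (d * w) W"
    and "\<sigma> \<in> borel_measurable borel"
    and "\<forall>\<tau>\<in>set \<sigma>s. \<tau> \<in> borel_measurable borel"
    and "length ks = Suc (length \<sigma>s)" and "hd ks = ((n - w) div s + 1) * d2" and "last ks = 1"
    and "Ws \<in> measurable M (PiM UNIV (\<lambda>_. matS))"
    and "indep_rv M matS W (PiM UNIV (\<lambda>_. matS)) Ws"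
    and "U \<in> SO d"
  shows "distr M (PiM UNIV (\<lambda>_. borel))
           (\<lambda>\<omega> X. conv_net d w s n d2 \<sigma> (W \<omega>) ks \<sigma>s (Ws \<omega>) (act d (mat_transpose U) X))
       = distr M (PiM UNIV (\<lambda>_. borel))
           (\<lambda>\<omega> X. conv_net d w s n d2 \<sigma> (W \<omega>) ks \<sigma>s (Ws \<omega>) X)"
proof -
  note A = assms
  interpret prob_space M by (rule assms(1))
  define P where "P = (PiM UNIV (\<lambda>_::nat. matS))"
  define B where "B = blk d (mat_transpose U)"
  define k where "k = d * w"
  define \<Phi> where "\<Phi> = (\<lambda>(p :: mat \<times> (nat \<Rightarrow> mat)) X. conv_net d w s n d2 \<sigma> (fst p) ks \<sigma>s (snd p) X)"
  define WB where "WB = (\<lambda>\<omega>. mat_mul d2 k k (W \<omega>) B)"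
  have orthU: "orthogonal_mat d U" using A(13) by (simp add: SO_def)
  have orthB: "orthogonal_mat k B" unfolding B_def k_def by (rule orth_blk[OF orthU])
  have Wm: "W \<in> measurable M matS" using A(5) by (simp add: regular_random_matrix_def)
  have Wsm: "Ws \<in> measurable M P" using A(11) by (simp add: P_def)
  have mulm: "(\<lambda>C. mat_mul d2 k k C B) \<in> measurable matS matS"
    unfolding mat_mul_def
  proof (rule meas_matS)
    fix i j
    show "(\<lambda>x. if i < d2 \<and> j < k then \<Sum>p<k. x i p * B p j else 0) \<in> borel_measurable matS"
      by (cases "i < d2 \<and> j < k") (auto intro!: borel_measurable_sum borel_measurable_times entry_meas)
  qed
  have WBm: "WB \<in> measurable M matS" unfolding WB_def
    by (rule measurable_compose[OF Wm mulm])
  have indW: "measure M (W -` A \<inter> Ws -` C \<inter> space M) = measure M (W -` A \<inter> space M) * measure M (Ws -` C \<inter> space M)"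
    if "A \<in> sets matS" "C \<in> sets P" for A C
  proof -
    have "indep_set (sigma_sets (space M) {W -` A \<inter> space M | A. A \<in> sets matS})
       (sigma_sets (space M) {Ws -` A \<inter> space M | A. A \<in> sets P})"
      using A(12) unfolding indep_rv_def P_def by simp
    then have "prob ((W -` A \<inter> space M) \<inter> (Ws -` C \<inter> space M)) = prob (W -` A \<inter> space M) * prob (Ws -` C \<inter> space M)"
    proof (rule indep_setD)
      show "W -` A \<inter> space M \<in> sigma_sets (space M) {W -` A \<inter> space M | A. A \<in> sets matS}"
        by (rule sigma_sets.Basic) (use that in blast)
      show "Ws -` C \<inter> space M \<in> sigma_sets (space M) {Ws -` A \<inter> space M | A. A \<in> sets P}"
        by (rule sigma_sets.Basic) (use that in blast)
    qed
    moreover have "(W -` A \<inter> space M) \<inter> (Ws -` C \<inter> space M) = W -` A \<inter> Ws -` C \<inter> space M" by auto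
    ultimately show ?thesis by simp
  qed
  have indWB: "measure M (WB -` A \<inter> Ws -` C \<inter> space M) = measure M (WB -` A \<inter> space M) * measure M (Ws -` C \<inter> space M)"
    if "A \<in> sets matS" "C \<in> sets P" for A C
  proof -
    define A' where "A' = (\<lambda>C. mat_mul d2 k k C B) -` A \<inter> space matS"
    have A': "A' \<in> sets matS" unfolding A'_def using mulm that(1) by (rule measurable_sets)
    have sp: "space matS = UNIV" by (simp add: matS_def space_PiM)
    have "WB -` A = W -` A'" by (auto simp: A'_def WB_def sp)
    then show ?thesis using indW[OF A' that(2)] by simp
  qed
  have dWB: "distr M matS WB = distr M matS W"
  proof -
    have "\<forall>V. orthogonal_mat (d*w) V \<longrightarrow> distr M matS W = distr M matS (\<lambda>\<omega>. mat_mul d2 (d*w) (d*w) (W \<omega>) V)"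
      using A(5) unfolding regular_random_matrix_def by blast
    then have "distr M matS W = distr M matS WB" using orthB unfolding WB_def k_def by blast
    then show ?thesis by (rule sym)
  qed
  have joint: "distr M (matS \<Otimes>\<^sub>M P) (\<lambda>\<omega>. (WB \<omega>, Ws \<omega>)) = distr M (matS \<Otimes>\<^sub>M P) (\<lambda>\<omega>. (W \<omega>, Ws \<omega>))"
  proof -
    have "distr M (matS \<Otimes>\<^sub>M P) (\<lambda>\<omega>. (WB \<omega>, Ws \<omega>)) = distr M matS WB \<Otimes>\<^sub>M distr M P Ws"
      by (rule joint_indep[OF A(1) WBm Wsm indWB])
    also have "\<dots> = distr M matS W \<Otimes>\<^sub>M distr M P Ws" by (simp only: dWB)
    also have "\<dots> = distr M (matS \<Otimes>\<^sub>M P) (\<lambda>\<omega>. (W \<omega>, Ws \<omega>))"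
      by (rule joint_indep[OF A(1) Wm Wsm indW, symmetric])
    finally show ?thesis .
  qed
  have \<Phi>m: "\<Phi> \<in> measurable (matS \<Otimes>\<^sub>M P) (PiM UNIV (\<lambda>_. borel))"
  proof -
    have "(\<lambda>p X. (\<lambda>p. \<Phi> p X) p) \<in> measurable (matS \<Otimes>\<^sub>M P) (PiM UNIV (\<lambda>_. borel))"
    proof (rule measurable_PiM_single')
      fix X :: "nat \<Rightarrow> vec"
      have e1: "(\<lambda>p. fst p i j) \<in> borel_measurable (matS \<Otimes>\<^sub>M P)" for i j
        by (rule measurable_compose[OF measurable_fst entry_meas])
      have e2: "(\<lambda>p. snd p l i j) \<in> borel_measurable (matS \<Otimes>\<^sub>M P)" for l i j
      proof -
        have "(\<lambda>p. snd p l) \<in> measurable (matS \<Otimes>\<^sub>M P) matS"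
          unfolding P_def by (rule measurable_compose[OF measurable_snd measurable_component_singleton]) simp
        then show ?thesis by (rule measurable_compose[OF _ entry_meas])
      qed
      have x: "(\<lambda>p. flatten d2 ((n - w) div s + 1) (conv_layer d w s n d2 \<sigma> (fst p) X) q)
          \<in> borel_measurable (matS \<Otimes>\<^sub>M P)" for q
      proof (cases "q < ((n - w) div s + 1) * d2 \<and> q div d2 \<le> (n - w) div s \<and> q mod d2 < d2")
        case True
        have "(\<lambda>p. \<sigma> (\<Sum>j<d*w. fst p (q mod d2) j * conv_T d w s (q div d2) X j)) \<in> borel_measurable (matS \<Otimes>\<^sub>M P)"
          by (rule measurable_compose[OF _ A(6)]) (intro borel_measurable_sum borel_measurable_times e1 borel_measurable_const)
        then show ?thesis using True by (simp add: flatten_def conv_layer_def layer_def)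
      next
        case False
        have eq0: "(\<lambda>p. flatten d2 ((n - w) div s + 1) (conv_layer d w s n d2 \<sigma> (fst p) X) q) = (\<lambda>p. 0)"
        proof (rule ext)
          fix p
          show "flatten d2 ((n - w) div s + 1) (conv_layer d w s n d2 \<sigma> (fst p) X) q = 0"
          proof (cases "d2 = 0")
            case True then show ?thesis by (simp add: flatten_def)
          next
            case nz: False
            then have "q mod d2 < d2" by simp
            then show ?thesis using False by (auto simp: flatten_def conv_layer_def layer_def)
          qed
        qed
        show ?thesis unfolding eq0 by (rule borel_measurable_const)
      qed
      show "(\<lambda>p. \<Phi> p X) \<in> borel_measurable (matS \<Otimes>\<^sub>M P)"
        unfolding \<Phi>_def conv_net_def split_def
        by (rule net_meas[OF A(7) e2 x]) simp
    qed (simp add: space_PiM)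
    then show ?thesis by simp
  qed
  have pm1: "(\<lambda>\<omega>. (WB \<omega>, Ws \<omega>)) \<in> measurable M (matS \<Otimes>\<^sub>M P)"
    using WBm Wsm by (rule measurable_Pair)
  have pm2: "(\<lambda>\<omega>. (W \<omega>, Ws \<omega>)) \<in> measurable M (matS \<Otimes>\<^sub>M P)"
    using Wm Wsm by (rule measurable_Pair)
  have L: "(\<lambda>\<omega> X. conv_net d w s n d2 \<sigma> (W \<omega>) ks \<sigma>s (Ws \<omega>) (act d (mat_transpose U) X))
      = (\<lambda>\<omega>. \<Phi> (WB \<omega>, Ws \<omega>))"
    by (intro ext) (simp only: \<Phi>_def WB_def B_def k_def fst_conv snd_conv conv_net_act)
  have R: "(\<lambda>\<omega> X. conv_net d w s n d2 \<sigma> (W \<omega>) ks \<sigma>s (Ws \<omega>) X) = (\<lambda>\<omega>. \<Phi> (W \<omega>, Ws \<omega>))"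
    by (simp add: \<Phi>_def)
  show ?thesis
    unfolding L R
  proof -
    have e1: "(\<lambda>\<omega>. \<Phi> (WB \<omega>, Ws \<omega>)) = \<Phi> \<circ> (\<lambda>\<omega>. (WB \<omega>, Ws \<omega>))" by (rule ext) simp
    have e2: "(\<lambda>\<omega>. \<Phi> (W \<omega>, Ws \<omega>)) = \<Phi> \<circ> (\<lambda>\<omega>. (W \<omega>, Ws \<omega>))" by (rule ext) simp
    show "distr M (PiM UNIV (\<lambda>_. borel)) (\<lambda>\<omega>. \<Phi> (WB \<omega>, Ws \<omega>)) = distr M (PiM UNIV (\<lambda>_. borel)) (\<lambda>\<omega>. \<Phi> (W \<omega>, Ws \<omega>))"
      unfolding e1 e2 distr_distr[OF \<Phi>m pm1, symmetric] distr_distr[OF \<Phi>m pm2, symmetric] joint ..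
  qed
qed

end
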